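(* Let $M$ be a rank-3 paving matroid on a linearly ordered finite ground set $E$, and let $M^0$ and $M^1$ be the rank-3 sparse paving matroids on $E$ whose sets of circuit-hyperplanes are $\mathcal{V}^0(M)$ and $\mathcal{V}^1(M)$ respectively. If $M$ has no minor isomorphic to $\mathcal{W}^3$ or $M(K_4)$, then neither $M^0$ nor $M^1$ has a minor isomorphic to $\mathcal{W}^3$ or $M(K_4)$.
   Context: A matroid is paving if every circuit has size $r(M)$ or $r(M)+1$; it is sparse paving if every nonspanning circuit is a hyperplane. For a hyperplane $H$ of $M$ (a rank-2 flat), let $\mathcal{V}(H)$ be the set of 3-subsets $V\subseteq H$ that are consecutive in $H$, i.e. there are no $v,v'\in V$ and $h\in H\setminus V$ with $v<h<v'$. Listing them in increasing order as $\mathcal{V}(H)=\{V_H^0,V_H^1,\dots,V_H^{|H|-3}\}$ (so consecutive ones share exactly two elements), set $\mathcal{V}^0(H)=\{V_H^i: i \text{ even}\}$, $\mathcal{V}^1(H)=\{V_H^i: i\text{ odd}\}$, and $\mathcal{V}^k(M)=\bigcup_{H}\mathcal{V}^k(H)$ over all hyperplanes $H$ of $M$, for $k\in\{0,1\}$. It is known (Pendavingh–Van der Pol) that each $\mathcal{V}^k(M)$ is the set of circuit-hyperplanes of a rank-3 sparse paving matroid on $E$. $\mathcal{W}^3$ is the rank-3 matroid on $\{a,b,c,d,e,f\}$ whose only dependent 3-sets are $\{a,b,c\},\{c,d,e\},\{e,f,a\}$; $M(K_4)$ is the rank-3 matroid on $\{a,b,c,d,e,f\}$ whose only dependent 3-sets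 are $\{a,b,c\},\{c,d,e\},\{e,f,a\},\{b,d,f\}$. *)

theory Defs
  imports Main
begin

definition matroid :: "'a set \<Rightarrow> 'a set set \<Rightarrow> bool" where
  "matroid E I \<longleftrightarrow> finite E \<and> I \<subseteq> Pow E \<and> {} \<in> I
     \<and> (\<forall>X Y. Y \<in> I \<and> X \<subseteq> Y \<longrightarrow> X \<in> I)
     \<and> (\<forall>X Y. X \<in> I \<and> Y \<in> I \<and> card X < card Y \<longrightarrow> (\<exists>e\<in>Y - X. insert e X \<in> I))"

definition rk :: "'a set set \<Rightarrow> 'a set \<Rightarrow> nat" where
  "rk I X = Max (card ` {Y. Y \<subseteq> X \<and> Y \<in> I})"

definition circuit :: "'a set \<Rightarrow> 'a set set \<Rightarrow> 'a set \<Rightarrow> bool" where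
  "circuit E I C \<longleftrightarrow> C \<subseteq> E \<and> C \<notin> I \<and> (\<forall>x\<in>C. C - {x} \<in> I)"

definition flat :: "'a set \<Rightarrow> 'a set set \<Rightarrow> 'a set \<Rightarrow> bool" where
  "flat E I X \<longleftrightarrow> X \<subseteq> E \<and> (\<forall>e\<in>E - X. rk I (insert e X) > rk I X)"

definition hyperplane :: "'a set \<Rightarrow> 'a set set \<Rightarrow> 'a set \<Rightarrow> bool" where
  "hyperplane E I H \<longleftrightarrow> flat E I H \<and> rk I H = rk I E - 1"

definition paving :: "'a set \<Rightarrow> 'a set set \<Rightarrow> bool" where
  "paving E I \<longleftrightarrow> (\<forall>C. circuit E I C \<longrightarrow> card C = rk I E \<or> card C = rk I E + 1)"

definition sparse_paving :: "'a set \<Rightarrow> 'a set set \<Rightarrow> bool" where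
  "sparse_paving E I \<longleftrightarrow> paving E I \<and>
     (\<forall>C. circuit E I C \<and> rk I C < rk I E \<longrightarrow> hyperplane E I C)"

definition circuit_hyperplanes :: "'a set \<Rightarrow> 'a set set \<Rightarrow> 'a set set" where
  "circuit_hyperplanes E I = {X. circuit E I X \<and> hyperplane E I X}"

text \<open>Consecutive 3-subsets V_H^i of H (i = 0..|H|-3), listed in increasing order;
  VH k H collects those with index i of parity k.\<close>

definition VH :: "nat \<Rightarrow> 'a::linorder set \<Rightarrow> 'a set set" where
  "VH k H = (let xs = sorted_list_of_set H in
      {set (take 3 (drop i xs)) | i. i + 3 \<le> length xs \<and> i mod 2 = k})"

definition VM :: "nat \<Rightarrow> 'a::linorder set \<Rightarrow> 'a set set \<Rightarrow> 'a set set" where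
  "VM k E I = \<Union> {VH k H | H. hyperplane E I H}"

text \<open>Minors: contract C and delete D (disjoint subsets of E).\<close>

definition minor_indep :: "'a set \<Rightarrow> 'a set set \<Rightarrow> 'a set \<Rightarrow> 'a set \<Rightarrow> 'a set set" where
  "minor_indep E I C D = {X. X \<subseteq> E - C - D \<and> rk I (X \<union> C) = card X + rk I C}"

definition iso :: "'a set \<Rightarrow> 'a set set \<Rightarrow> 'b set \<Rightarrow> 'b set set \<Rightarrow> bool" where
  "iso E1 I1 E2 I2 \<longleftrightarrow> (\<exists>f. bij_betw f E1 E2 \<and> (\<forall>X. X \<subseteq> E1 \<longrightarrow> (X \<in> I1 \<longleftrightarrow> f ` X \<in> I2)))"

definition has_minor_iso :: "'a set \<Rightarrow> 'a set set \<Rightarrow> 'b set \<Rightarrow> 'b set set \<Rightarrow> bool" where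
  "has_minor_iso E I E' I' \<longleftrightarrow> (\<exists>C D. C \<subseteq> E \<and> D \<subseteq> E \<and> C \<inter> D = {} \<and>
      iso (E - C - D) (minor_indep E I C D) E' I')"

text \<open>Ground set {a,b,c,d,e,f} encoded as {0,1,2,3,4,5}.\<close>

definition six :: "nat set" where "six = {0,1,2,3,4,5}"

definition W3_indep :: "nat set set" where
  "W3_indep = {X. X \<subseteq> six \<and> card X \<le> 3 \<and> X \<notin> {{0,1,2},{2,3,4},{4,5,0}}}"

definition MK4_indep :: "nat set set" where
  "MK4_indep = {X. X \<subseteq> six \<and> card X \<le> 3 \<and> X \<notin> {{0,1,2},{2,3,4},{4,5,0},{1,3,5}}}"

end

theory Submission imports Defs begin

lemma m_fin: "matroid E I \<Longrightarrow> finite E" by (simp add: matroid_def)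
lemma m_sub: "matroid E I \<Longrightarrow> X \<in> I \<Longrightarrow> X \<subseteq> E" unfolding matroid_def by blast
lemma m_down: "matroid E I \<Longrightarrow> Y \<in> I \<Longrightarrow> X \<subseteq> Y \<Longrightarrow> X \<in> I" unfolding matroid_def by blast
lemma m_empty: "matroid E I \<Longrightarrow> {} \<in> I" unfolding matroid_def by blast
lemma m_aug: "matroid E I \<Longrightarrow> X \<in> I \<Longrightarrow> Y \<in> I \<Longrightarrow> card X < card Y \<Longrightarrow> \<exists>e\<in>Y - X. insert e X \<in> I"
  unfolding matroid_def by blast

lemma rk_set_fin: assumes a: "matroid E I" "X \<subseteq> E" shows "finite (card ` {Y. Y \<subseteq> X \<and> Y \<in> I})"
proof -
  have "finite X" using a m_fin finite_subset by blast
  then have "finite {Y. Y \<subseteq> X}" by simp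
  then show ?thesis by (rule finite_imageI[OF finite_subset, rotated]) auto
qed

lemma rk_ge: "matroid E I \<Longrightarrow> X \<subseteq> E \<Longrightarrow> Y \<subseteq> X \<Longrightarrow> Y \<in> I \<Longrightarrow> card Y \<le> rk I X"
  unfolding rk_def by (rule Max_ge[OF rk_set_fin]) auto

lemma rk_witness: assumes a: "matroid E I" "X \<subseteq> E" shows "\<exists>Y. Y \<subseteq> X \<and> Y \<in> I \<and> card Y = rk I X"
proof -
  have "{} \<in> {Y. Y \<subseteq> X \<and> Y \<in> I}" using m_empty[OF a(1)] by simp
  then have ne: "card ` {Y. Y \<subseteq> X \<and> Y \<in> I} \<noteq> {}" unfolding image_is_empty by blast
  have "rk I X \<in> card ` {Y. Y \<subseteq> X \<and> Y \<in> I}" unfolding rk_def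
    using Max_in[OF rk_set_fin[OF a] ne] .
  then obtain Y where Y: "Y \<in> {Y. Y \<subseteq> X \<and> Y \<in> I}" "rk I X = card Y" by (rule imageE)
  have "Y \<subseteq> X" "Y \<in> I" using Y(1) by simp_all
  then show ?thesis using Y(2) by (intro exI[of _ Y]) simp
qed

lemma rk_le_card:
  assumes a: "matroid E I" "X \<subseteq> E" shows "rk I X \<le> card X"
proof -
  obtain Y where Y: "Y \<subseteq> X" "card Y = rk I X" using rk_witness[OF a] by blast
  have "finite X" using a m_fin finite_subset by blast
  then have "card Y \<le> card X" using Y(1) by (simp add: card_mono)
  then show ?thesis using Y(2) by simp
qed

lemma rk_mono:
  assumes a: "matroid E I" "X' \<subseteq> E" "X \<subseteq> X'" shows "rk I X \<le> rk I X'"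
proof -
  have "X \<subseteq> E" using a by blast
  then obtain Y where Y: "Y \<subseteq> X" "Y \<in> I" "card Y = rk I X" using rk_witness[OF a(1)] by blast
  have "Y \<subseteq> X'" using Y(1) a(3) by blast
  then show ?thesis using rk_ge[OF a(1,2) _ Y(2)] Y(3) by simp
qed

lemma rk_iff:
  assumes a: "matroid E I" "X \<subseteq> E" shows "rk I X = card X \<longleftrightarrow> X \<in> I"
proof
  assume c: "rk I X = card X"
  obtain Y where Y: "Y \<subseteq> X" "Y \<in> I" "card Y = rk I X" using rk_witness[OF a] by blast
  have "finite X" using a m_fin finite_subset by blast
  then have "Y = X" using Y c card_subset_eq by metis
  then show "X \<in> I" using Y by simp
next
  assume c: "X \<in> I"
  show "rk I X = card X" using rk_ge[OF a order_refl c] rk_le_card[OF a] by simp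
qed

lemma rk_empty: "matroid E I \<Longrightarrow> rk I {} = 0"
  using rk_le_card[of E I "{}"] by simp

lemma indep_le: "matroid E I \<Longrightarrow> Y \<in> I \<Longrightarrow> card Y \<le> rk I E"
  using rk_ge[of E I E Y] m_sub[of E I Y] by simp

lemma small_indep:
  assumes m: "matroid E I" and p: "paving E I" and r: "rk I E = 3" and X: "X \<subseteq> E" "card X \<le> 2"
  shows "X \<in> I"
proof (rule ccontr)
  assume "X \<notin> I"
  then have "\<exists>C. (C \<subseteq> X \<and> C \<notin> I) \<and> (\<forall>Y. (Y \<subseteq> X \<and> Y \<notin> I) \<longrightarrow> card C \<le> card Y)"
    by (intro ex_has_least_nat[where m=card]) blast
  then obtain C where C: "C \<subseteq> X" "C \<notin> I" and mn: "\<And>Y. Y \<subseteq> X \<Longrightarrow> Y \<notin> I \<Longrightarrow> card C \<le> card Y" by blast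
  have fX: "finite X" using X m m_fin finite_subset by blast
  have fC: "finite C" using C fX finite_subset by blast
  have "circuit E I C" unfolding circuit_def
  proof (intro conjI ballI)
    show "C \<subseteq> E" using C X by auto
    show "C \<notin> I" by fact
    fix x assume "x \<in> C"
    have "card (C - {x}) < card C" using fC \<open>x \<in> C\<close> by (rule card_Diff1_less)
    moreover have "C - {x} \<subseteq> X" using C by blast
    ultimately show "C - {x} \<in> I" using mn[of "C - {x}"] by linarith
  qed
  then have "card C = 3 \<or> card C = 4" using p r unfolding paving_def by simp
  moreover have "card C \<le> card X" using C(1) fX by (rule card_mono[rotated])
  ultimately show False using X(2) by linarith
qed

lemma hyp_props: "hyperplane E I H \<Longrightarrow> rk I E = 3 \<Longrightarrow> H \<subseteq> E \<and> rk I H = 2"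
  by (simp add: hyperplane_def flat_def)

lemma line_dep:
  assumes m: "matroid E I" and r: "rk I E = 3" and h: "hyperplane E I H" and X: "X \<subseteq> H" "card X = 3"
  shows "X \<notin> I"
  using rk_ge[OF m _ X(1)] hyp_props[OF h r] X by fastforce

lemma line_closed:
  assumes m: "matroid E I" and r: "rk I E = 3" and h: "hyperplane E I H"
    and pq: "p \<in> H" "q \<in> H" "p \<noteq> q" "{p,q} \<in> I" and rE: "x \<in> E" and d: "{p,q,x} \<notin> I"
  shows "x \<in> H"
proof (rule ccontr)
  assume xH: "x \<notin> H"
  have HE: "H \<subseteq> E" and rH: "rk I H = 2" using hyp_props[OF h r] by auto
  have "rk I (insert x H) > 2" using h xH rE rH unfolding hyperplane_def flat_def by auto
  moreover obtain J where J: "J \<subseteq> insert x H" "J \<in> I" "card J = rk I (insert x H)"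
    using rk_witness[OF m, of "insert x H"] HE rE by auto
  moreover have "card J \<le> 3" using indep_le[OF m J(2)] r by simp
  ultimately have cJ: "card J = 3" by simp
  have "card {p,q} < card J" using cJ pq by simp
  then obtain e where e: "e \<in> J - {p,q}" "insert e {p,q} \<in> I" using m_aug[OF m pq(4) J(2)] by blast
  show False
  proof (cases "e = x")
    case True then show False using e d by (simp add: insert_commute)
  next
    case False
    then have "insert e {p,q} \<subseteq> H" using e J pq by auto
    moreover have "card (insert e {p,q}) = 3" using e pq by auto
    ultimately show False using line_dep[OF m r h] e by blast
  qed
qed

lemma line_eq:
  assumes m: "matroid E I" and p: "paving E I" and r: "rk I E = 3"
    and h1: "hyperplane E I H1" and h2: "hyperplane E I H2"
    and pq: "p \<in> H1" "q \<in> H1" "p \<in> H2" "q \<in> H2" "p \<noteq> q"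
  shows "H1 = H2"
proof -
  have sub: "Ha \<subseteq> Hb" if ha: "hyperplane E I Ha" and hb: "hyperplane E I Hb"
    and "p \<in> Ha" "q \<in> Ha" "p \<in> Hb" "q \<in> Hb" for Ha Hb
  proof
    fix x assume x: "x \<in> Ha"
    have HE: "Ha \<subseteq> E" "Hb \<subseteq> E" using hyp_props[OF ha r] hyp_props[OF hb r] by auto
    have "{p,q} \<subseteq> E" using HE that by auto
    then have pqI: "{p,q} \<in> I" using small_indep[OF m p r, of "{p,q}"] by (simp add: card_insert_if)
    show "x \<in> Hb"
    proof (cases "x = p \<or> x = q")
      case True then show ?thesis using that by auto
    next
      case False
      then have "{p,q,x} \<notin> I" using line_dep[OF m r ha, of "{p,q,x}"] that x pq(5) by auto
      then show ?thesis using line_closed[OF m r hb _ _ pq(5) pqI, of x] that x HE by auto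
    qed
  qed
  show ?thesis using sub[OF h1 h2] sub[OF h2 h1] pq by blast
qed


lemma mem_win:
  assumes "i + 3 \<le> length xs"
  shows "x \<in> set (take 3 (drop i xs)) \<longleftrightarrow> (\<exists>j. i \<le> j \<and> j < i + 3 \<and> x = xs ! j)"
proof
  assume "x \<in> set (take 3 (drop i xs))"
  then obtain t where t: "t < length (take 3 (drop i xs))" "x = take 3 (drop i xs) ! t"
    by (auto simp: in_set_conv_nth)
  then have "t < 3" "x = xs ! (i + t)" using assms by auto
  then show "\<exists>j. i \<le> j \<and> j < i + 3 \<and> x = xs ! j" by (intro exI[of _ "i+t"]) simp
next
  assume "\<exists>j. i \<le> j \<and> j < i + 3 \<and> x = xs ! j"
  then obtain j where j: "i \<le> j" "j < i + 3" "x = xs ! j" by blast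
  have "take 3 (drop i xs) ! (j - i) = xs ! j" using j assms by simp
  moreover have "j - i < length (take 3 (drop i xs))" using j assms by simp
  ultimately show "x \<in> set (take 3 (drop i xs))" using j(3) by (metis nth_mem)
qed

lemma VH_sub: "finite H \<Longrightarrow> V \<in> VH k H \<Longrightarrow> V \<subseteq> H"
  unfolding VH_def Let_def
  by (auto dest!: in_set_takeD in_set_dropD)

lemma VH_convex:
  fixes H :: "'a::linorder set"
  assumes fH: "finite H" and V: "V \<in> VH k H" and uw: "u \<in> V" "w \<in> V" and v: "v \<in> H" "u < v" "v < w"
  shows "v \<in> V"
proof -
  define xs where "xs = sorted_list_of_set H"
  obtain i where i: "i + 3 \<le> length xs" "V = set (take 3 (drop i xs))"
    using V unfolding VH_def Let_def xs_def by blast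
  have s: "sorted xs" and sx: "set xs = H" using fH unfolding xs_def by simp_all
  obtain a where a: "i \<le> a" "a < i + 3" "u = xs ! a" using uw(1) mem_win[OF i(1)] i(2) by blast
  obtain b where b: "i \<le> b" "b < i + 3" "w = xs ! b" using uw(2) mem_win[OF i(1)] i(2) by blast
  obtain c where c: "c < length xs" "v = xs ! c" using v(1) sx by (metis in_set_conv_nth)
  have "a < c"
  proof (rule ccontr)
    assume "\<not> a < c"
    then have "xs ! c \<le> xs ! a" using sorted_nth_mono[OF s, of c a] a i(1) by simp
    then show False using a c v by simp
  qed
  moreover have "c < b"
  proof (rule ccontr)
    assume "\<not> c < b"
    then have "xs ! b \<le> xs ! c" using sorted_nth_mono[OF s, of b c] c by simp
    then show False using b c v by simp
  qed
  ultimately have "\<exists>j. i \<le> j \<and> j < i + 3 \<and> v = xs ! j" using a b c by (intro exI[of _ c]) simp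
  then show ?thesis using mem_win[OF i(1)] i(2) by simp
qed

lemma comb:
  fixes x y z :: nat
  assumes "x \<in> six" "y \<in> six" "z \<in> six" "x \<noteq> y" "y \<noteq> z" "x \<noteq> z"
    and "card ({x,y,z} \<inter> {0,1,2}) \<noteq> 3" "card ({x,y,z} \<inter> {2,3,4}) \<noteq> 3"
    "card ({x,y,z} \<inter> {4,5,0}) \<noteq> 3" "card ({x,y,z} \<inter> {1,3,5}) \<noteq> 3"
  shows "card ({x,y,z} \<inter> {0,1,2}) = 2 \<or> card ({x,y,z} \<inter> {2,3,4}) = 2 \<or> card ({x,y,z} \<inter> {4,5,0}) = 2"
  using assms unfolding six_def by auto


lemma F_gen:
  assumes m: "matroid E I" and pv: "paving E I" and r: "rk I E = 3"
    and L: "hyperplane E I L" and hinj: "inj_on h six" and hE: "h ` six \<subseteq> E"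
    and TL: "h ` T \<subseteq> L" and T6: "T \<subseteq> six" and off: "\<And>x. x \<in> six \<Longrightarrow> x \<notin> T \<Longrightarrow> h x \<notin> L"
    and Y: "Y \<subseteq> six" "card Y = 3" "card (Y \<inter> T) = 2"
  shows "h ` Y \<in> I"
proof (rule ccontr)
  assume nI: "h ` Y \<notin> I"
  have fY: "finite Y" using Y(2) by (intro card_ge_0_finite) simp
  obtain p q where pq: "Y \<inter> T = {p,q}" "p \<noteq> q" using Y(3) unfolding card_2_iff by blast
  have "card (Y - T) = 1"
  proof -
    have "Y - T = Y - (Y \<inter> T)" by blast
    then have "card (Y - T) = card Y - card (Y \<inter> T)" using fY by (simp add: card_Diff_subset)
    then show ?thesis using Y by simp
  qed
  then obtain x where x: "Y - T = {x}" by (rule card_1_singletonE)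
  have Yeq: "Y = {p,q,x}" using pq(1) x by blast
  have p6: "p \<in> six" "q \<in> six" "x \<in> six" using Yeq Y(1) by auto
  have hpq: "h p \<noteq> h q" using hinj pq(2) p6 by (meson inj_on_def)
  have inL: "h p \<in> L" "h q \<in> L" using TL pq(1) by auto
  have HE: "L \<subseteq> E" using hyp_props[OF L r] by simp
  have "{h p, h q} \<subseteq> E" using inL HE by auto
  then have pqI: "{h p, h q} \<in> I" using small_indep[OF m pv r, of "{h p, h q}"] by (simp add: card_insert_if)
  have "{h p, h q, h x} \<notin> I" using nI Yeq by simp
  then have "h x \<in> L" using line_closed[OF m r L inL hpq pqI, of "h x"] hE p6 by auto
  moreover have "x \<notin> T" using x by blast
  ultimately show False using off p6 by blast
qed

lemma card3_eq: "card Y = 3 \<Longrightarrow> card T = 3 \<Longrightarrow> card (Y \<inter> T) = 3 \<Longrightarrow> Y = T"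
proof -
  assume a: "card Y = 3" "card T = 3" "card (Y \<inter> T) = 3"
  have f: "finite Y" "finite T" using a by (intro card_ge_0_finite; simp)+
  have "Y \<inter> T = Y" using card_subset_eq[OF f(1), of "Y \<inter> T"] a by simp
  moreover have "Y \<inter> T = T" using card_subset_eq[OF f(2), of "Y \<inter> T"] a by simp
  ultimately show "Y = T" by simp
qed

lemma comb2:
  assumes Y: "Y \<subseteq> six" "card Y = 3" and n: "Y \<noteq> {0,1,2}" "Y \<noteq> {2,3,4}" "Y \<noteq> {4,5,0}" "Y \<noteq> {1,3,5}"
  shows "card (Y \<inter> {0,1,2}) = 2 \<or> card (Y \<inter> {2,3,4}) = 2 \<or> card (Y \<inter> {4,5,0}) = 2"
proof -
  obtain x y z where xyz: "Y = {x,y,z}" "x \<noteq> y" "y \<noteq> z" "x \<noteq> z" using Y(2) unfolding card_3_iff by blast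
  have c: "card (Y \<inter> T) \<noteq> 3" if "card T = 3" "Y \<noteq> T" for T
    using card3_eq[OF Y(2) that(1)] that(2) by blast
  have s: "x \<in> six" "y \<in> six" "z \<in> six" using Y(1) xyz(1) by auto
  have c1: "card ({x,y,z} \<inter> {0,1,2}) \<noteq> 3" using c[of "{0,1,2}"] n(1) xyz(1) by simp
  have c2: "card ({x,y,z} \<inter> {2,3,4}) \<noteq> 3" using c[of "{2,3,4}"] n(2) xyz(1) by simp
  have c3: "card ({x,y,z} \<inter> {4,5,0}) \<noteq> 3" using c[of "{4,5,0}"] n(3) xyz(1) by simp
  have c4: "card ({x,y,z} \<inter> {1,3,5}) \<noteq> 3" using c[of "{1,3,5}"] n(4) xyz(1) by simp
  show ?thesis unfolding xyz(1) by (rule comb[OF s xyz(2-4) c1 c2 c3 c4])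
qed


lemma neq_card: "card (A \<inter> B) \<noteq> card A \<Longrightarrow> A \<noteq> B" by auto

lemma notin4: "({0,1,3}::nat set) \<notin> {{0,1,2},{2,3,4},{4,5,0},{1,3,5}}"
  apply (simp only: insert_iff empty_iff simp_thms de_Morgan_disj)
  apply (intro conjI neq_card)
  apply simp_all
  done

lemma main_k:
  fixes E :: "'a::linorder set" and I Ik :: "'a set set" and Tr :: "nat set set"
  assumes m: "matroid E I" and r: "rk I E = 3" and pv: "paving E I"
    and mk: "matroid E Ik" and rkk: "rk Ik E = 3" and spk: "sparse_paving E Ik"
    and ch: "circuit_hyperplanes E Ik = VM k E I"
    and nW: "\<not> has_minor_iso E I six W3_indep" and nK: "\<not> has_minor_iso E I six MK4_indep"
    and Tr: "Tr = {{0,1,2},{2,3,4},{4,5,0}} \<or> Tr = {{0,1,2},{2,3,4},{4,5,0},{1,3,5}}"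
    and hm: "has_minor_iso E Ik six {X. X \<subseteq> six \<and> card X \<le> 3 \<and> X \<notin> Tr}"
  shows False
proof -
  define W where "W = {X. X \<subseteq> six \<and> card X \<le> 3 \<and> X \<notin> Tr}"
  have pk: "paving E Ik" using spk unfolding sparse_paving_def by simp
  have fE: "finite E" using m by (rule m_fin)
  obtain C D where CD: "C \<subseteq> E" "D \<subseteq> E" "C \<inter> D = {}" and isoCD: "iso (E - C - D) (minor_indep E Ik C D) six W"
    using hm unfolding has_minor_iso_def W_def by blast
  obtain g where bij: "bij_betw g (E - C - D) six"
     and iso0: "\<forall>X. X \<subseteq> E - C - D \<longrightarrow> (X \<in> minor_indep E Ik C D \<longleftrightarrow> g ` X \<in> W)"
    using isoCD unfolding iso_def by blast
  have iso: "\<And>X. X \<subseteq> E - C - D \<Longrightarrow> (X \<in> minor_indep E Ik C D \<longleftrightarrow> g ` X \<in> W)" using iso0 by blast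
  define S where "S = E - C - D"
  define h where "h = inv_into S g"
  have hbij: "bij_betw h six S" using bij_betw_inv_into[OF bij] unfolding h_def S_def .
  have gh: "\<And>y. y \<in> six \<Longrightarrow> g (h y) = y" using bij unfolding h_def S_def
    by (simp add: bij_betw_inv_into_right)
  have hS: "h ` six \<subseteq> S" using hbij by (simp add: bij_betw_def)
  have SE: "S \<subseteq> E" unfolding S_def by blast
  have hE: "h ` six \<subseteq> E" using hS SE by blast
  have hinj: "inj_on h six" using hbij by (simp add: bij_betw_def)
  have ghY: "\<And>Y. Y \<subseteq> six \<Longrightarrow> g ` (h ` Y) = Y"
  proof -
    fix Y assume "Y \<subseteq> six"
    then have "\<forall>y\<in>Y. g (h y) = y" using gh by blast
    then show "g ` (h ` Y) = Y" by (simp add: image_image)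
  qed
  have hgX: "\<And>X. X \<subseteq> S \<Longrightarrow> h ` (g ` X) = X"
  proof -
    fix X assume X: "X \<subseteq> S"
    have "\<forall>x\<in>X. h (g x) = x" using bij X unfolding h_def S_def
      by (meson bij_betw_inv_into_left subsetD)
    then show "h ` (g ` X) = X" by (simp add: image_image)
  qed
  have cardh: "\<And>Y. Y \<subseteq> six \<Longrightarrow> card (h ` Y) = card Y"
    using hinj by (meson card_image inj_on_subset)
  have key: "\<And>Y. Y \<subseteq> six \<Longrightarrow> h ` Y \<in> minor_indep E Ik C D \<longleftrightarrow> Y \<in> W"
  proof -
    fix Y assume Y: "Y \<subseteq> six"
    have "h ` Y \<subseteq> E - C - D" using Y hS unfolding S_def by blast
    then show "h ` Y \<in> minor_indep E Ik C D \<longleftrightarrow> Y \<in> W" using iso ghY[OF Y] by simp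
  qed
  have trc: "\<And>T. T \<in> Tr \<Longrightarrow> card T = 3 \<and> T \<subseteq> six" using Tr unfolding six_def by auto
  have C0: "C = {}"
  proof (rule ccontr)
    assume "C \<noteq> {}"
    then obtain x where x: "x \<in> C" by blast
    have "x \<in> E" using x CD by blast
    then have "{x} \<in> Ik" using small_indep[OF mk pk rkk, of "{x}"] by simp
    then have r1: "1 \<le> rk Ik C" using rk_ge[OF mk CD(1), of "{x}"] x by simp
    have y6: "{0,1,3} \<subseteq> six" unfolding six_def by simp
    have sub4: "Tr \<subseteq> {{0,1,2},{2,3,4},{4,5,0},{1,3,5}}" using Tr by (elim disjE; simp)
    have "{0,1,3} \<notin> Tr"
    proof
      assume a: "{0,1,3} \<in> Tr"
      show False using notin4 subsetD[OF sub4 a] by (rule notE)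
    qed
    then have "{0,1,3} \<in> W" using y6 unfolding W_def by simp
    then have "h ` {0,1,3} \<in> minor_indep E Ik C D" using key[OF y6] by simp
    then have eq: "rk Ik (h ` {0,1,3} \<union> C) = 3 + rk Ik C"
      unfolding minor_indep_def using cardh[OF y6] by simp
    have "h ` {0,1,3} \<union> C \<subseteq> E" using hE y6 CD by blast
    then have "rk Ik (h ` {0,1,3} \<union> C) \<le> 3" using rk_mono[OF mk order_refl] rkk by metis
    then show False using eq r1 by simp
  qed
  have keyI: "\<And>Y. Y \<subseteq> six \<Longrightarrow> h ` Y \<in> Ik \<longleftrightarrow> Y \<in> W"
  proof -
    fix Y assume Y: "Y \<subseteq> six"
    have sub: "h ` Y \<subseteq> E" using Y hE by blast
    have hY: "h ` Y \<subseteq> E - C - D" using Y hS unfolding S_def by blast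
    have "h ` Y \<in> minor_indep E Ik C D \<longleftrightarrow> rk Ik (h ` Y) = card (h ` Y)"
      unfolding minor_indep_def using hY by (simp add: C0 rk_empty[OF mk])
    then have "h ` Y \<in> minor_indep E Ik C D \<longleftrightarrow> h ` Y \<in> Ik" using rk_iff[OF mk sub] by simp
    then show "h ` Y \<in> Ik \<longleftrightarrow> Y \<in> W" using key[OF Y] by simp
  qed
  have tri: "\<And>T. T \<in> Tr \<Longrightarrow> \<exists>L. hyperplane E I L \<and> h ` T \<in> VH k L"
  proof -
    fix T assume T: "T \<in> Tr"
    have T3: "card T = 3" and T6: "T \<subseteq> six" using trc[OF T] by auto
    have "T \<notin> W" using T unfolding W_def by simp
    then have nI: "h ` T \<notin> Ik" using keyI[OF T6] by simp
    have hTE: "h ` T \<subseteq> E" using T6 hE by blast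
    have circ: "circuit E Ik (h ` T)" unfolding circuit_def
    proof (intro conjI ballI)
      show "h ` T \<subseteq> E" by fact
      show "h ` T \<notin> Ik" by fact
      fix y assume "y \<in> h ` T"
      then obtain t where t: "t \<in> T" "y = h t" by blast
      have eq: "h ` (T - {t}) = h ` T - h ` {t}"
        by (rule inj_on_image_set_diff[OF hinj]) (use T6 t in auto)
      have fT: "finite T" using T3 by (intro card_ge_0_finite) simp
      have c2: "card (T - {t}) = 2" using T3 t fT by simp
      have "T - {t} \<notin> Tr" using trc c2 by fastforce
      moreover have "T - {t} \<subseteq> six" using T6 by blast
      ultimately have "T - {t} \<in> W" unfolding W_def using c2 by simp
      then have "h ` (T - {t}) \<in> Ik" using keyI \<open>T - {t} \<subseteq> six\<close> by blast
      then show "h ` T - {y} \<in> Ik" using eq t by simp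
    qed
    have "rk Ik (h ` T) \<le> card (h ` T)" using rk_le_card[OF mk hTE] .
    moreover have "rk Ik (h ` T) \<noteq> card (h ` T)" using rk_iff[OF mk hTE] nI by simp
    moreover have "card (h ` T) = 3" using cardh[OF T6] T3 by simp
    ultimately have "rk Ik (h ` T) < rk Ik E" using rkk by simp
    then have "hyperplane E Ik (h ` T)" using spk circ unfolding sparse_paving_def by blast
    then have "h ` T \<in> VM k E I" using circ ch unfolding circuit_hyperplanes_def by blast
    then show "\<exists>L. hyperplane E I L \<and> h ` T \<in> VH k L" unfolding VM_def by blast
  qed
  have T123: "{0,1,2} \<in> Tr" "{2,3,4} \<in> Tr" "{4,5,0} \<in> Tr" using Tr by (elim disjE; simp)+
  obtain La where La: "hyperplane E I La" "h ` {0,1,2} \<in> VH k La" using tri[OF T123(1)] by blast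
  obtain Lb where Lb: "hyperplane E I Lb" "h ` {2,3,4} \<in> VH k Lb" using tri[OF T123(2)] by blast
  obtain Lc where Lc: "hyperplane E I Lc" "h ` {4,5,0} \<in> VH k Lc" using tri[OF T123(3)] by blast
  have fL: "finite La" "finite Lb" "finite Lc"
    using hyp_props[OF La(1) r] hyp_props[OF Lb(1) r] hyp_props[OF Lc(1) r] fE finite_subset by blast+
  have sa: "h ` {0,1,2} \<subseteq> La" using VH_sub[OF fL(1) La(2)] .
  have sb: "h ` {2,3,4} \<subseteq> Lb" using VH_sub[OF fL(2) Lb(2)] .
  have sc: "h ` {4,5,0} \<subseteq> Lc" using VH_sub[OF fL(3) Lc(2)] .
  have ma: "h 0 \<in> La" "h 1 \<in> La" "h 2 \<in> La" using sa by auto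
  have mb: "h 2 \<in> Lb" "h 3 \<in> Lb" "h 4 \<in> Lb" using sb by auto
  have mc: "h 4 \<in> Lc" "h 5 \<in> Lc" "h 0 \<in> Lc" using sc by auto
  have dd: "\<And>i j. h i = h j \<Longrightarrow> i \<in> six \<Longrightarrow> j \<in> six \<Longrightarrow> i = j" using inj_onD[OF hinj] by blast
  have dst: "h 0 \<noteq> h 1" "h 0 \<noteq> h 2" "h 0 \<noteq> h 3" "h 0 \<noteq> h 4" "h 0 \<noteq> h 5"
    "h 1 \<noteq> h 2" "h 1 \<noteq> h 3" "h 1 \<noteq> h 4" "h 1 \<noteq> h 5" "h 2 \<noteq> h 3" "h 2 \<noteq> h 4" "h 2 \<noteq> h 5"
    "h 3 \<noteq> h 4" "h 3 \<noteq> h 5" "h 4 \<noteq> h 5"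
    by (auto simp: six_def dest!: dd)
  have LE: "\<And>H1 H2 p q. hyperplane E I H1 \<Longrightarrow> hyperplane E I H2 \<Longrightarrow> p \<in> H1 \<Longrightarrow> q \<in> H1 \<Longrightarrow> p \<in> H2 \<Longrightarrow> q \<in> H2 \<Longrightarrow> p \<noteq> q \<Longrightarrow> H1 = H2"
    using line_eq[OF m pv r] by blast
  have nall: "\<not> (La = Lb \<and> Lb = Lc)"
  proof
    assume eqs: "La = Lb \<and> Lb = Lc"
    have V1: "h ` {0,1,2} \<in> VH k La" using La(2) .
    have V2: "h ` {2,3,4} \<in> VH k La" using Lb(2) eqs by simp
    have V3: "h ` {4,5,0} \<in> VH k La" using Lc(2) eqs by simp
    have m4: "h 4 \<in> La" using mb eqs by simp
    have cv: "\<And>u v w V. V \<in> VH k La \<Longrightarrow> u \<in> V \<Longrightarrow> w \<in> V \<Longrightarrow> v \<in> La \<Longrightarrow> u < v \<Longrightarrow> v < w \<Longrightarrow> v \<in> V"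
      using VH_convex[OF fL(1)] by blast
    have n1: "\<not> (h 0 < h 2 \<and> h 2 < h 4)" using cv[OF V3, of "h 0" "h 4" "h 2"] ma dst by auto
    have n2: "\<not> (h 4 < h 2 \<and> h 2 < h 0)" using cv[OF V3, of "h 4" "h 0" "h 2"] ma dst by auto
    have n3: "\<not> (h 2 < h 0 \<and> h 0 < h 4)" using cv[OF V2, of "h 2" "h 4" "h 0"] ma dst by auto
    have n4: "\<not> (h 4 < h 0 \<and> h 0 < h 2)" using cv[OF V2, of "h 4" "h 2" "h 0"] ma dst by auto
    have n5: "\<not> (h 0 < h 4 \<and> h 4 < h 2)" using cv[OF V1, of "h 0" "h 2" "h 4"] m4 dst by auto
    have n6: "\<not> (h 2 < h 4 \<and> h 4 < h 0)" using cv[OF V1, of "h 2" "h 0" "h 4"] m4 dst by auto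
    show False
    proof (cases "h 0 < h 2")
      case True
      then show False using n1 n4 n5 dst(4) dst(11) by (meson linorder_neqE less_trans)
    next
      case False
      then have "h 2 < h 0" using dst(2) by (meson linorder_neqE)
      then show False using n2 n3 n6 dst(4) dst(11) by (meson linorder_neqE less_trans)
    qed
  qed
  have nab: "La \<noteq> Lb"
  proof
    assume e: "La = Lb"
    have "Lc = La" using LE[OF Lc(1) La(1), of "h 0" "h 4"] mc ma mb e dst by simp
    then show False using nall e by simp
  qed
  have nac: "La \<noteq> Lc"
  proof
    assume e: "La = Lc"
    have "Lb = La" using LE[OF Lb(1) La(1), of "h 2" "h 4"] mc ma mb e dst by simp
    then show False using nall e by simp
  qed
  have nbc: "Lb \<noteq> Lc"
  proof
    assume e: "Lb = Lc"
    have "La = Lb" using LE[OF La(1) Lb(1), of "h 0" "h 2"] mc ma mb e dst by simp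
    then show False using nall e by simp
  qed
  have offa: "\<And>x. x \<in> six \<Longrightarrow> x \<notin> {0,1,2} \<Longrightarrow> h x \<notin> La"
  proof -
    fix x :: nat assume x: "x \<in> six" "x \<notin> {0,1,2}"
    then have "x = 3 \<or> x = 4 \<or> x = 5" unfolding six_def by auto
    moreover have "h 3 \<notin> La" using LE[OF La(1) Lb(1), of "h 2" "h 3"] ma mb dst nab by auto
    moreover have "h 4 \<notin> La" using LE[OF La(1) Lb(1), of "h 2" "h 4"] ma mb dst nab by auto
    moreover have "h 5 \<notin> La" using LE[OF La(1) Lc(1), of "h 0" "h 5"] ma mc dst nac by auto
    ultimately show "h x \<notin> La" by auto
  qed
  have offb: "\<And>x. x \<in> six \<Longrightarrow> x \<notin> {2,3,4} \<Longrightarrow> h x \<notin> Lb"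
  proof -
    fix x :: nat assume x: "x \<in> six" "x \<notin> {2,3,4}"
    then have "x = 0 \<or> x = 1 \<or> x = 5" unfolding six_def by auto
    moreover have "h 0 \<notin> Lb" using LE[OF La(1) Lb(1), of "h 0" "h 2"] ma mb dst nab by auto
    moreover have "h 1 \<notin> Lb" using LE[OF La(1) Lb(1), of "h 1" "h 2"] ma mb dst nab by auto
    moreover have "h 5 \<notin> Lb" using LE[OF Lb(1) Lc(1), of "h 4" "h 5"] mb mc dst nbc by auto
    ultimately show "h x \<notin> Lb" by auto
  qed
  have offc: "\<And>x. x \<in> six \<Longrightarrow> x \<notin> {4,5,0} \<Longrightarrow> h x \<notin> Lc"
  proof -
    fix x :: nat assume x: "x \<in> six" "x \<notin> {4,5,0}"
    then have "x = 1 \<or> x = 2 \<or> x = 3" unfolding six_def by auto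
    moreover have "h 1 \<notin> Lc" using LE[OF La(1) Lc(1), of "h 0" "h 1"] ma mc dst nac by auto
    moreover have "h 2 \<notin> Lc" using LE[OF La(1) Lc(1), of "h 0" "h 2"] ma mc dst nac by auto
    moreover have "h 3 \<notin> Lc" using LE[OF Lb(1) Lc(1), of "h 3" "h 4"] mb mc dst nbc by auto
    ultimately show "h x \<notin> Lc" by auto
  qed
  define B where "B = (h ` {1,3,5} \<in> I)"
  have s6: "{0,1,2} \<subseteq> six" "{2,3,4} \<subseteq> six" "{4,5,0} \<subseteq> six" unfolding six_def by auto
  have Gen: "\<And>Y. Y \<subseteq> six \<Longrightarrow> h ` Y \<in> I \<longleftrightarrow>
      (card Y \<le> 3 \<and> Y \<noteq> {0,1,2} \<and> Y \<noteq> {2,3,4} \<and> Y \<noteq> {4,5,0} \<and> (Y = {1,3,5} \<longrightarrow> B))"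
  proof -
    fix Y :: "nat set" assume Y: "Y \<subseteq> six"
    have cY: "card (h ` Y) = card Y" using cardh[OF Y] .
    have hYE: "h ` Y \<subseteq> E" using Y hE by blast
    consider "card Y \<ge> 4" | "card Y \<le> 2" | "card Y = 3" by linarith
    then show "h ` Y \<in> I \<longleftrightarrow>
      (card Y \<le> 3 \<and> Y \<noteq> {0,1,2} \<and> Y \<noteq> {2,3,4} \<and> Y \<noteq> {4,5,0} \<and> (Y = {1,3,5} \<longrightarrow> B))"
    proof cases
      case 1
      have "h ` Y \<notin> I" using indep_le[OF m, of "h ` Y"] r cY 1 by auto
      then show ?thesis using 1 by auto
    next
      case 2
      have "h ` Y \<in> I" using small_indep[OF m pv r hYE] cY 2 by simp
      then show ?thesis using 2 by auto
    next
      case 3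
      show ?thesis
      proof (cases "Y = {0,1,2} \<or> Y = {2,3,4} \<or> Y = {4,5,0}")
        case True
        have "h ` Y \<notin> I"
        proof -
          { assume "Y = {0,1,2}" then have ?thesis using line_dep[OF m r La(1) sa] cY 3 by simp }
          moreover
          { assume "Y = {2,3,4}" then have ?thesis using line_dep[OF m r Lb(1) sb] cY 3 by simp }
          moreover
          { assume "Y = {4,5,0}" then have ?thesis using line_dep[OF m r Lc(1) sc] cY 3 by simp }
          ultimately show ?thesis using True by blast
        qed
        then show ?thesis using True by auto
      next
        case False
        show ?thesis
        proof (cases "Y = {1,3,5}")
          case True
          have "{1,3,5} \<noteq> ({0,1,2}::nat set)" "{1,3,5} \<noteq> ({2,3,4}::nat set)" "{1,3,5} \<noteq> ({4,5,0}::nat set)"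
            by (rule neq_card, simp)+
          then show ?thesis using True unfolding B_def by simp
        next
          case F2: False
          have "card (Y \<inter> {0,1,2}) = 2 \<or> card (Y \<inter> {2,3,4}) = 2 \<or> card (Y \<inter> {4,5,0}) = 2"
            using comb2[OF Y 3] False F2 by blast
          moreover have "card (Y \<inter> {0,1,2}) = 2 \<Longrightarrow> h ` Y \<in> I"
            using F_gen[OF m pv r La(1) hinj hE sa s6(1) offa Y 3] by blast
          moreover have "card (Y \<inter> {2,3,4}) = 2 \<Longrightarrow> h ` Y \<in> I"
            using F_gen[OF m pv r Lb(1) hinj hE sb s6(2) offb Y 3] by blast
          moreover have "card (Y \<inter> {4,5,0}) = 2 \<Longrightarrow> h ` Y \<in> I"
            using F_gen[OF m pv r Lc(1) hinj hE sc s6(3) offc Y 3] by blast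
          ultimately have "h ` Y \<in> I" by blast
          then show ?thesis using False F2 3 by auto
        qed
      qed
    qed
  qed
  have isoM: "\<And>Wx. (\<And>Y. Y \<subseteq> six \<Longrightarrow> (h ` Y \<in> I \<longleftrightarrow> Y \<in> Wx)) \<Longrightarrow> has_minor_iso E I six Wx"
  proof -
    fix Wx :: "nat set set" assume hyp: "\<And>Y. Y \<subseteq> six \<Longrightarrow> (h ` Y \<in> I \<longleftrightarrow> Y \<in> Wx)"
    have bij0: "bij_betw g (E - {} - D) six" using bij C0 by simp
    have "\<forall>X. X \<subseteq> E - {} - D \<longrightarrow> (X \<in> minor_indep E I {} D \<longleftrightarrow> g ` X \<in> Wx)"
    proof (intro allI impI)
      fix X assume X: "X \<subseteq> E - {} - D"
      have XS: "X \<subseteq> S" using X C0 unfolding S_def by simp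
      have XE: "X \<subseteq> E" using X by blast
      have "g ` X \<subseteq> g ` (E - {} - D)" using X by (rule image_mono)
      then have gX: "g ` X \<subseteq> six" using bij_betw_imp_surj_on[OF bij0] by simp
      have "X \<in> minor_indep E I {} D \<longleftrightarrow> rk I X = card X"
        unfolding minor_indep_def using X by (simp add: rk_empty[OF m])
      also have "\<dots> \<longleftrightarrow> X \<in> I" using rk_iff[OF m XE] .
      also have "\<dots> \<longleftrightarrow> h ` (g ` X) \<in> I" using hgX[OF XS] by simp
      also have "\<dots> \<longleftrightarrow> g ` X \<in> Wx" using hyp[OF gX] .
      finally show "X \<in> minor_indep E I {} D \<longleftrightarrow> g ` X \<in> Wx" .
    qed
    then have "iso (E - {} - D) (minor_indep E I {} D) six Wx" unfolding iso_def using bij0 by blast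
    then show "has_minor_iso E I six Wx" unfolding has_minor_iso_def using CD(2) by blast
  qed
  show False
  proof (cases B)
    case True
    have "has_minor_iso E I six W3_indep"
      by (rule isoM) (use Gen True in \<open>auto simp: W3_indep_def\<close>)
    then show False using nW by simp
  next
    case False
    have "has_minor_iso E I six MK4_indep"
      by (rule isoM) (use Gen False in \<open>auto simp: MK4_indep_def\<close>)
    then show False using nK by simp
  qed
qed


theorem lemma11:
  fixes E :: "'a::linorder set" and I I0 I1 :: "'a set set"
  assumes "matroid E I" and "rk I E = 3" and "paving E I"
    and "matroid E I0" and "rk I0 E = 3" and "sparse_paving E I0"
    and "circuit_hyperplanes E I0 = VM 0 E I"
    and "matroid E I1" and "rk I1 E = 3" and "sparse_paving E I1"
    and "circuit_hyperplanes E I1 = VM 1 E I"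
    and "\<not> has_minor_iso E I six W3_indep" and "\<not> has_minor_iso E I six MK4_indep"
  shows "\<not> has_minor_iso E I0 six W3_indep \<and> \<not> has_minor_iso E I0 six MK4_indep
    \<and> \<not> has_minor_iso E I1 six W3_indep \<and> \<not> has_minor_iso E I1 six MK4_indep"
proof -
  have T3: "{{0,1,2},{2,3,4},{4,5,0}} = {{0,1,2},{2,3,4},{4,5,0}} \<or> {{0,1,2},{2,3,4},{4,5,0}} = {{0,1,2},{2,3,4},{4,5,0},{1,3,5::nat}}" by simp
  have T4: "{{0,1,2},{2,3,4},{4,5,0},{1,3,5}} = {{0,1,2},{2,3,4},{4,5,0}} \<or> {{0,1,2},{2,3,4},{4,5,0},{1,3,5}} = {{0,1,2},{2,3,4},{4,5,0},{1,3,5::nat}}" by simp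
  have W: "W3_indep = {X. X \<subseteq> six \<and> card X \<le> 3 \<and> X \<notin> {{0,1,2},{2,3,4},{4,5,0}}}" unfolding W3_indep_def ..
  have K: "MK4_indep = {X. X \<subseteq> six \<and> card X \<le> 3 \<and> X \<notin> {{0,1,2},{2,3,4},{4,5,0},{1,3,5}}}" unfolding MK4_indep_def ..
  show ?thesis
    using main_k[OF assms(1-3) assms(4-7) assms(12,13) T3] main_k[OF assms(1-3) assms(4-7) assms(12,13) T4]
      main_k[OF assms(1-3) assms(8-11) assms(12,13) T3] main_k[OF assms(1-3) assms(8-11) assms(12,13) T4]
    unfolding W K by blast
qed

end
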